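(* Let $f:\mathbb{R}^d\to\mathbb{R}$ be subdifferentially polynomially bounded (SPB) with parameters $\mathrm{R}_1\ge 0$, $\mathrm{R}_2>0$ and integer $m\ge 0$. Then for all $x,y\in\mathbb{R}^d$, \[ |f(x)-f(y)|\le\big(2^{m-1}\mathrm{R}_1\|x\|^m+2^{m-1}\mathrm{R}_1\|y-x\|^m+\mathrm{R}_2\big)\|x-y\|. \]
   Context: $\|\cdot\|$ is the Euclidean norm. For a locally Lipschitz $f:\mathbb{R}^d\to\mathbb{R}$, $\partial_C f(x)$ denotes the Clarke subdifferential. $f$ is called SPB with parameters $\mathrm{R}_1\ge0$, $\mathrm{R}_2>0$ and integer $m\ge 0$ (where $\mathrm{R}_1=0$ if and only if $m=0$) if $f$ is locally Lipschitz and $\sup_{\zeta\in\partial_C f(x)}\|\zeta\|\le \mathrm{R}_1\|x\|^m+\mathrm{R}_2$ for all $x\in\mathbb{R}^d$. The convention $0^0=1$ is used. *)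

theory Defs
  imports "HOL-Analysis.Analysis"
begin

definition locally_lipschitz :: "('a::euclidean_space \<Rightarrow> real) \<Rightarrow> bool" where
  "locally_lipschitz f \<longleftrightarrow>
     (\<forall>x. \<exists>e>0. \<exists>L. \<forall>y\<in>ball x e. \<forall>z\<in>ball x e. \<bar>f y - f z\<bar> \<le> L * dist y z)"

definition clarke_dir_deriv :: "('a::euclidean_space \<Rightarrow> real) \<Rightarrow> 'a \<Rightarrow> 'a \<Rightarrow> ereal" where
  "clarke_dir_deriv f x v =
     Limsup (nhds x \<times>\<^sub>F at_right 0) (\<lambda>(y, t). ereal ((f (y + t *\<^sub>R v) - f y) / t))"

definition clarke_subdiff :: "('a::euclidean_space \<Rightarrow> real) \<Rightarrow> 'a \<Rightarrow> 'a set" where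
  "clarke_subdiff f x = {\<zeta>. \<forall>v. ereal (\<zeta> \<bullet> v) \<le> clarke_dir_deriv f x v}"

definition SPB :: "('a::euclidean_space \<Rightarrow> real) \<Rightarrow> real \<Rightarrow> real \<Rightarrow> nat \<Rightarrow> bool" where
  "SPB f R1 R2 m \<longleftrightarrow> R1 \<ge> 0 \<and> R2 > 0 \<and> (R1 = 0 \<longleftrightarrow> m = 0) \<and>
     locally_lipschitz f \<and>
     (\<forall>x. \<forall>\<zeta>\<in>clarke_subdiff f x. norm \<zeta> \<le> R1 * norm x ^ m + R2)"

end

theory Submission
  imports Defs
begin

lemma ll_bound:
  fixes f :: "'a::euclidean_space \<Rightarrow> real"
  assumes "locally_lipschitz f"
  obtains L where "L \<ge> 0" "\<And>v. eventually (\<lambda>(y,t). \<bar>(f (y + t *\<^sub>R v) - f y)/t\<bar> \<le> L * norm v) (nhds z \<times>\<^sub>F at_right 0)"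
proof -
  obtain e L where e: "e>0" and L: "\<forall>y\<in>ball z e. \<forall>x\<in>ball z e. \<bar>f y - f x\<bar> \<le> L * dist y x"
    using assms unfolding locally_lipschitz_def by blast
  define L' where "L' = max L 0"
  have "eventually (\<lambda>(y,t). \<bar>(f (y + t *\<^sub>R v) - f y)/t\<bar> \<le> L' * norm v) (nhds z \<times>\<^sub>F at_right 0)" for v
  proof -
    have 1: "eventually (\<lambda>y. y \<in> ball z (e/2)) (nhds z)" using e by (intro eventually_nhds_in_open) auto
    have pos: "0 < e/(2*(norm v+1))" using e by (intro divide_pos_pos) (auto intro: add_nonneg_pos)
    have 2: "eventually (\<lambda>t. 0 < t \<and> t < e/(2*(norm v+1))) (at_right (0::real))"
      using pos by (subst eventually_at_right[of 0 "e/(2*(norm v+1))"]) auto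
    have 3: "\<bar>(f (y + t *\<^sub>R v) - f y)/t\<bar> \<le> L' * norm v" if y: "y \<in> ball z (e/2)" and t: "0 < t \<and> t < e/(2*(norm v+1))" for y t
    proof -
      have "t * norm v \<le> e/(2*(norm v+1)) * norm v" using t by (intro mult_right_mono) auto
      also have "\<dots> = e/2 * (norm v / (norm v + 1))" by (simp add: field_simps)
      also have "\<dots> \<le> e/2" using e by (intro mult_left_le) (auto simp: divide_le_eq_1 add_nonneg_pos)
      finally have tv: "t * norm v \<le> e/2" .
      have "dist z (y + t *\<^sub>R v) \<le> dist z y + norm (t *\<^sub>R v)"
        by (metis dist_norm dist_triangle2 norm_minus_commute add_diff_cancel_left')
      also have "\<dots> < e" using y t tv by auto
      finally have yt: "y + t *\<^sub>R v \<in> ball z e" by simp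
      have yb: "y \<in> ball z e" using y e by auto
      have "\<bar>f (y + t *\<^sub>R v) - f y\<bar> \<le> L * dist (y + t *\<^sub>R v) y" using L yt yb by blast
      also have "\<dots> \<le> L' * (t * norm v)" using t unfolding L'_def by (auto simp: dist_norm intro!: mult_right_mono)
      finally have "\<bar>f (y + t *\<^sub>R v) - f y\<bar> / t \<le> L' * norm v" using t by (simp add: field_simps)
      thus ?thesis using t by simp
    qed
    show ?thesis unfolding eventually_prod_filter
      using 1 2 3 by blast
  qed
  moreover have "L' \<ge> 0" by (simp add: L'_def)
  ultimately show ?thesis using that by blast
qed


definition dq :: "('a::euclidean_space \<Rightarrow> real) \<Rightarrow> 'a \<Rightarrow> real \<Rightarrow> 'a \<Rightarrow> real" where
  "dq f y t v = (f (y + t *\<^sub>R v) - f y) / t"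

lemma cdd_alt: "clarke_dir_deriv f z v = Limsup (nhds z \<times>\<^sub>F at_right 0) (\<lambda>x. ereal (dq f (fst x) (snd x) v))"
  unfolding clarke_dir_deriv_def dq_def by (simp add: case_prod_beta')

lemma cdd_le:
  assumes "\<And>e. e > 0 \<Longrightarrow> eventually (\<lambda>x. dq f (fst x) (snd x) v \<le> c + e) (nhds z \<times>\<^sub>F at_right 0)"
  shows "clarke_dir_deriv f z v \<le> ereal c"
proof (rule ereal_le_epsilon2)
  fix e :: real assume e: "e > 0"
  have "clarke_dir_deriv f z v \<le> ereal (c + e)" unfolding cdd_alt
    by (rule Limsup_bounded) (use assms[OF e] in \<open>auto elim!: eventually_mono\<close>)
  thus "clarke_dir_deriv f z v \<le> ereal c + ereal e" by simp
qed

lemma cdd_lt: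
  assumes "clarke_dir_deriv f z v < ereal c"
  shows "eventually (\<lambda>x. dq f (fst x) (snd x) v < c) (nhds z \<times>\<^sub>F at_right 0)"
  using Limsup_lessD[OF assms[unfolded cdd_alt]] by simp

lemma hmap1: "filterlim (\<lambda>x. (fst x + snd x *\<^sub>R v, snd x)) (nhds (z::'a::real_normed_vector) \<times>\<^sub>F at_right (0::real)) (nhds z \<times>\<^sub>F at_right 0)"
proof (rule filterlim_Pair)
  have "((\<lambda>x. fst x + snd x *\<^sub>R v) \<longlongrightarrow> z + 0 *\<^sub>R v) (nhds z \<times>\<^sub>F at_right (0::real))"
  proof (intro tendsto_intros)
    show "(fst \<longlongrightarrow> z) (nhds z \<times>\<^sub>F at_right (0::real))" by (rule filterlim_fst)
    have "filterlim snd (at_right (0::real)) (nhds z \<times>\<^sub>F at_right (0::real))" by (rule filterlim_snd)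
    thus "(snd \<longlongrightarrow> (0::real)) (nhds z \<times>\<^sub>F at_right (0::real))"
      using filterlim_at by blast
  qed
  thus "((\<lambda>x. fst x + snd x *\<^sub>R v) \<longlongrightarrow> z) (nhds z \<times>\<^sub>F at_right (0::real))" by simp
  show "filterlim (\<lambda>x. snd x) (at_right 0) (nhds z \<times>\<^sub>F at_right (0::real))" by (rule filterlim_snd)
qed

lemma hmap2:
  assumes "(c::real) > 0"
  shows "filterlim (\<lambda>x. (fst x, c * snd x)) (nhds (z::'a::real_normed_vector) \<times>\<^sub>F at_right (0::real)) (nhds z \<times>\<^sub>F at_right 0)"
proof (rule filterlim_Pair)
  show "(fst \<longlongrightarrow> z) (nhds z \<times>\<^sub>F at_right (0::real))" by (rule filterlim_fst)
  have s: "filterlim snd (at_right (0::real)) (nhds z \<times>\<^sub>F at_right (0::real))" by (rule filterlim_snd)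
  hence s1: "(snd \<longlongrightarrow> (0::real)) (nhds z \<times>\<^sub>F at_right (0::real))" and
     s2: "eventually (\<lambda>x. snd x \<in> {0<..} \<and> snd x \<noteq> 0) (nhds z \<times>\<^sub>F at_right (0::real))"
    using filterlim_at by blast+
  have "((\<lambda>x. c * snd x) \<longlongrightarrow> c * 0) (nhds z \<times>\<^sub>F at_right (0::real))" by (intro tendsto_intros s1)
  moreover have "eventually (\<lambda>x. c * snd x \<in> {0<..} \<and> c * snd x \<noteq> 0) (nhds z \<times>\<^sub>F at_right (0::real))"
    using s2 by eventually_elim (use assms in auto)
  ultimately show "filterlim (\<lambda>x. c * snd x) (at_right 0) (nhds z \<times>\<^sub>F at_right (0::real))"
    using filterlim_at by fastforce
qed


lemma F_nonbot: "nhds (z::'a::euclidean_space) \<times>\<^sub>F at_right (0::real) \<noteq> bot"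
  by (simp add: prod_filter_eq_bot)

lemma cdd_finite:
  fixes f :: "'a::euclidean_space \<Rightarrow> real"
  assumes "locally_lipschitz f"
  obtains L where "L \<ge> 0" "\<And>v. \<exists>r. clarke_dir_deriv f z v = ereal r \<and> \<bar>r\<bar> \<le> L * norm v"
proof -
  obtain L where L0: "L \<ge> 0" and L: "\<And>v. eventually (\<lambda>(y,t). \<bar>(f (y + t *\<^sub>R v) - f y)/t\<bar> \<le> L * norm v) (nhds z \<times>\<^sub>F at_right 0)"
    using ll_bound[OF assms] by blast
  have "\<exists>r. clarke_dir_deriv f z v = ereal r \<and> \<bar>r\<bar> \<le> L * norm v" for v
  proof -
    have ev: "eventually (\<lambda>x. \<bar>dq f (fst x) (snd x) v\<bar> \<le> L * norm v) (nhds z \<times>\<^sub>F at_right 0)"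
      using L[of v] by (simp add: dq_def case_prod_beta')
    have up: "clarke_dir_deriv f z v \<le> ereal (L * norm v)" unfolding cdd_alt
      by (rule Limsup_bounded) (use ev in \<open>auto elim!: eventually_mono\<close>)
    have lo: "ereal (- (L * norm v)) \<le> clarke_dir_deriv f z v" unfolding cdd_alt
      by (rule le_Limsup[OF F_nonbot]) (use ev in \<open>auto elim!: eventually_mono\<close>)
    show ?thesis
    proof (cases "clarke_dir_deriv f z v")
      case (real r) thus ?thesis using up lo by auto
    qed (use up lo in auto)
  qed
  thus ?thesis using that L0 by blast
qed

lemma cdd_sub:
  assumes "clarke_dir_deriv f z v = ereal a" "clarke_dir_deriv f z w = ereal b"
  shows "clarke_dir_deriv f z (v + w) \<le> ereal (a + b)"
proof (rule cdd_le)
  fix e :: real assume e: "e > 0"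
  have E1: "eventually (\<lambda>x. dq f (fst x) (snd x) v < a + e/2) (nhds z \<times>\<^sub>F at_right 0)"
    by (rule cdd_lt) (use assms e in simp)
  have E2': "eventually (\<lambda>x. dq f (fst x) (snd x) w < b + e/2) (nhds z \<times>\<^sub>F at_right 0)"
    by (rule cdd_lt) (use assms e in simp)
  have E2: "eventually (\<lambda>x. dq f (fst x + snd x *\<^sub>R v) (snd x) w < b + e/2) (nhds z \<times>\<^sub>F at_right 0)"
    using hmap1[of v z, unfolded filterlim_iff, rule_format, OF E2'] by simp
  show "eventually (\<lambda>x. dq f (fst x) (snd x) (v + w) \<le> a + b + e) (nhds z \<times>\<^sub>F at_right 0)"
    using E1 E2
  proof eventually_elim
    case (elim x)
    have "dq f (fst x) (snd x) (v + w) = dq f (fst x + snd x *\<^sub>R v) (snd x) w + dq f (fst x) (snd x) v"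
      unfolding dq_def by (simp add: scaleR_add_right add.assoc diff_divide_distrib)
    thus ?case using elim by simp
  qed
qed

lemma cdd_hom:
  assumes "clarke_dir_deriv f z v = ereal a" "c > 0"
  shows "clarke_dir_deriv f z (c *\<^sub>R v) \<le> ereal (c * a)"
proof (rule cdd_le)
  fix e :: real assume e: "e > 0"
  have E1: "eventually (\<lambda>x. dq f (fst x) (snd x) v < a + e/c) (nhds z \<times>\<^sub>F at_right 0)"
    by (rule cdd_lt) (use assms e in simp)
  have E2: "eventually (\<lambda>x. dq f (fst x) (c * snd x) v < a + e/c) (nhds z \<times>\<^sub>F at_right 0)"
    using hmap2[OF assms(2), of z, unfolded filterlim_iff, rule_format, OF E1] by simp
  show "eventually (\<lambda>x. dq f (fst x) (snd x) (c *\<^sub>R v) \<le> c * a + e) (nhds z \<times>\<^sub>F at_right 0)"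
    using E2
  proof eventually_elim
    case (elim x)
    have "dq f (fst x) (snd x) (c *\<^sub>R v) = c * dq f (fst x) (c * snd x) v"
      unfolding dq_def using assms(2) by (cases "snd x = 0") (simp_all add: field_simps)
    also have "\<dots> \<le> c * (a + e/c)" using elim assms(2) by simp
    also have "\<dots> = c * a + e" using assms(2) by (simp add: field_simps)
    finally show ?case .
  qed
qed


lemma cdd_sup:
  fixes f :: "'a::euclidean_space \<Rightarrow> real"
  assumes "locally_lipschitz f" "\<delta> > 0"
  obtains \<zeta> where "\<zeta> \<in> clarke_subdiff f z" "clarke_dir_deriv f z v0 < ereal (\<zeta> \<bullet> v0 + \<delta>)"
proof -
  obtain L where L0: "L \<ge> 0" and L: "\<And>v. \<exists>r. clarke_dir_deriv f z v = ereal r \<and> \<bar>r\<bar> \<le> L * norm v"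
    using cdd_finite[OF assms(1)] by blast
  define q where "q v = (SOME r. clarke_dir_deriv f z v = ereal r \<and> \<bar>r\<bar> \<le> L * norm v)" for v
  have qe: "clarke_dir_deriv f z v = ereal (q v)" and qb: "\<bar>q v\<bar> \<le> L * norm v" for v
    using someI_ex[OF L[of v]] unfolding q_def by auto
  have sub: "q (v + w) \<le> q v + q w" for v w
    using cdd_sub[OF qe qe, of v w] qe[of "v+w"] by simp
  have hom: "q (c *\<^sub>R v) \<le> c * q v" if "c > 0" for c v
    using cdd_hom[OF qe that, of v] qe[of "c *\<^sub>R v"] by simp
  have lip1: "q v - q u \<le> L * dist v u" for u v
  proof -
    have "q v = q (u + (v - u))" by simp
    also have "\<dots> \<le> q u + q (v - u)" by (rule sub)
    also have "\<dots> \<le> q u + L * dist v u" using qb[of "v - u"] by (simp add: dist_norm)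
    finally show ?thesis by simp
  qed
  have "L-lipschitz_on UNIV q"
    unfolding lipschitz_on_def using L0 lip1
    by (metis abs_le_iff dist_commute dist_real_def minus_diff_eq)
  hence cont: "continuous_on UNIV q" by (rule lipschitz_on_continuous_on)
  define E where "E = {x::'a \<times> real. q (fst x) \<le> snd x}"
  have conv: "convex E" unfolding convex_def E_def
  proof (intro ballI allI impI, simp)
    fix x y :: "'a \<times> real" and u w :: real
    assume x: "q (fst x) \<le> snd x" and y: "q (fst y) \<le> snd y" and u: "0 \<le> u" and w: "0 \<le> w" and uw: "u + w = 1"
    have "q (u *\<^sub>R fst x + w *\<^sub>R fst y) \<le> u * q (fst x) + w * q (fst y)"
    proof (cases "u = 0")
      case True thus ?thesis using uw by simp
    next
      case u0: False
      show ?thesis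
      proof (cases "w = 0")
        case True thus ?thesis using uw by simp
      next
        case False
        have "q (u *\<^sub>R fst x + w *\<^sub>R fst y) \<le> q (u *\<^sub>R fst x) + q (w *\<^sub>R fst y)" by (rule sub)
        also have "\<dots> \<le> u * q (fst x) + w * q (fst y)"
          using hom[of u "fst x"] hom[of w "fst y"] u w u0 False by simp
        finally show ?thesis .
      qed
    qed
    also have "\<dots> \<le> u * snd x + w * snd y"
      using x y u w by (intro add_mono mult_left_mono) auto
    finally show "q (u *\<^sub>R fst x + w *\<^sub>R fst y) \<le> u * snd x + w * snd y" .
  qed
  have clo: "closed E" unfolding E_def
    by (intro closed_Collect_le continuous_on_compose2[OF cont] continuous_intros) auto
  have nE: "(v0, q v0 - \<delta>) \<notin> E" unfolding E_def using assms(2) by simp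
  obtain a b where ab1: "a \<bullet> (v0, q v0 - \<delta>) < b" and ab2: "\<forall>x\<in>E. b < a \<bullet> x"
    using separating_hyperplane_closed_point[OF conv clo nE] by blast
  define a1 where "a1 = fst a"
  define a2 where "a2 = snd a"
  have H: "b < a1 \<bullet> v + a2 * r" if "q v \<le> r" for v r
    using ab2 that unfolding E_def a1_def a2_def by (auto simp: inner_prod_def)
  have H0: "a1 \<bullet> v0 + a2 * (q v0 - \<delta>) < b"
    using ab1 unfolding a1_def a2_def by (simp add: inner_prod_def)
  have "b < a1 \<bullet> v0 + a2 * q v0" by (rule H) simp
  with H0 have "a2 * \<delta> > 0" by (simp add: algebra_simps)
  hence a2: "a2 > 0" using assms(2) by (simp add: zero_less_mult_iff)
  have q0: "q 0 \<le> 0" using qb[of 0] by simp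
  have b0: "b < 0" using H[OF q0] by simp
  have nn: "a1 \<bullet> v + a2 * q v \<ge> 0" for v
  proof (rule ccontr)
    assume neg: "\<not> ?thesis"
    define c where "c = - (a1 \<bullet> v + a2 * q v)"
    have c: "c > 0" using neg unfolding c_def by simp
    define l where "l = (\<bar>b\<bar> + 1) / c"
    have l: "l > 0" using c unfolding l_def by (simp add: add_nonneg_pos)
    have "b < a1 \<bullet> (l *\<^sub>R v) + a2 * q (l *\<^sub>R v)" by (rule H) simp
    also have "\<dots> \<le> l * (a1 \<bullet> v) + a2 * (l * q v)"
      using hom[OF l, of v] a2 by (simp add: mult_left_mono)
    also have "\<dots> = - l * c" unfolding c_def by (simp add: algebra_simps)
    also have "\<dots> = - (\<bar>b\<bar> + 1)" unfolding l_def using c by simp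
    finally show False by simp
  qed
  define \<zeta> where "\<zeta> = (- 1 / a2) *\<^sub>R a1"
  have zi: "\<zeta> \<bullet> v = - (a1 \<bullet> v) / a2" for v unfolding \<zeta>_def by simp
  have "\<zeta> \<in> clarke_subdiff f z"
    unfolding clarke_subdiff_def
  proof (intro CollectI allI)
    fix v
    have "\<zeta> \<bullet> v \<le> q v" unfolding zi using nn[of v] a2 by (simp add: field_simps)
    thus "ereal (\<zeta> \<bullet> v) \<le> clarke_dir_deriv f z v" using qe by simp
  qed
  moreover have "q v0 < \<zeta> \<bullet> v0 + \<delta>"
  proof -
    have "a1 \<bullet> v0 + a2 * (q v0 - \<delta>) < 0" using H0 b0 by simp
    hence "q v0 - \<delta> < - (a1 \<bullet> v0) / a2" using a2 by (simp add: field_simps)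
    thus ?thesis unfolding zi by simp
  qed
  ultimately show ?thesis using that qe by auto
qed


lemma cdd_bound:
  fixes f :: "'a::euclidean_space \<Rightarrow> real"
  assumes "SPB f R1 R2 m"
  shows "clarke_dir_deriv f z w \<le> ereal ((R1 * norm z ^ m + R2) * norm w)"
proof (rule ereal_le_epsilon2)
  fix d :: real assume d: "d > 0"
  have ll: "locally_lipschitz f" using assms unfolding SPB_def by blast
  obtain \<zeta> where z1: "\<zeta> \<in> clarke_subdiff f z" and z2: "clarke_dir_deriv f z w < ereal (\<zeta> \<bullet> w + d)"
    using cdd_sup[OF ll d] by blast
  have "norm \<zeta> \<le> R1 * norm z ^ m + R2" using assms z1 unfolding SPB_def by blast
  hence "\<zeta> \<bullet> w \<le> (R1 * norm z ^ m + R2) * norm w"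
    using norm_cauchy_schwarz[of \<zeta> w] by (meson mult_right_mono norm_ge_zero order_trans)
  thus "clarke_dir_deriv f z w \<le> ereal ((R1 * norm z ^ m + R2) * norm w) + ereal d"
  proof -
    have "ereal (\<zeta> \<bullet> w + d) \<le> ereal ((R1 * norm z ^ m + R2) * norm w + d)"
      using \<open>\<zeta> \<bullet> w \<le> _\<close> by simp
    hence "clarke_dir_deriv f z w \<le> ereal ((R1 * norm z ^ m + R2) * norm w + d)"
      using z2 by (meson less_imp_le order_trans)
    thus ?thesis by simp
  qed
qed

lemma dini_step:
  fixes f :: "'a::euclidean_space \<Rightarrow> real"
  assumes "SPB f R1 R2 m" "e > 0"
  shows "eventually (\<lambda>t. f (z + t *\<^sub>R w) - f z \<le> ((R1 * norm z ^ m + R2) * norm w + e) * t) (at_right 0)"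
proof -
  let ?c = "(R1 * norm z ^ m + R2) * norm w + e"
  have "clarke_dir_deriv f z w < ereal ?c"
    using cdd_bound[OF assms(1), of z w] assms(2) by (simp add: order_le_less_trans)
  from cdd_lt[OF this] obtain Pf Pg where "eventually Pf (nhds z)" "eventually Pg (at_right 0)"
    and P: "\<And>y t. Pf y \<Longrightarrow> Pg t \<Longrightarrow> dq f y t w < ?c"
    unfolding eventually_prod_filter by auto
  hence "Pf z" using eventually_nhds_x_imp_x by blast
  show ?thesis using \<open>eventually Pg (at_right 0)\<close> eventually_at_right_less[of "0::real"]
  proof eventually_elim
    case (elim t)
    have "dq f z t w < ?c" using P[OF \<open>Pf z\<close> elim(1)] .
    thus ?case using elim(2) unfolding dq_def by (simp add: divide_less_eq less_imp_le)
  qed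
qed

lemma dini_mvt:
  fixes g :: "real \<Rightarrow> real"
  assumes cont: "continuous_on UNIV g"
    and D: "\<And>s e. s \<in> {0..<1} \<Longrightarrow> e > 0 \<Longrightarrow> eventually (\<lambda>t. g (s + t) - g s \<le> (c + e) * t) (at_right 0)"
  shows "g 1 - g 0 \<le> c"
proof (rule field_le_epsilon)
  fix e :: real assume e: "e > 0"
  define S where "S = {0..1} \<inter> {s. g s - g 0 - (c + e) * s \<le> 0}"
  have cS: "closed S" unfolding S_def
    by (intro closed_Int closed_atLeastAtMost closed_Collect_le continuous_intros
        continuous_on_compose2[OF cont]) auto
  have "0 \<in> S" unfolding S_def by simp
  hence ne: "S \<noteq> {}" by blast
  have bdd: "bdd_above S" unfolding S_def by (auto intro: bdd_aboveI[of _ 1])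
  define s where "s = Sup S"
  have sS: "s \<in> S" unfolding s_def by (rule closed_contains_Sup[OF ne bdd cS])
  have s1: "s = 1"
  proof (rule ccontr)
    assume "s \<noteq> 1"
    with sS have s01: "s \<in> {0..<1}" unfolding S_def by auto
    from D[OF s01 e] obtain b where b: "b > 0" and bb: "\<And>t. 0 < t \<Longrightarrow> t < b \<Longrightarrow> g (s + t) - g s \<le> (c + e) * t"
      unfolding eventually_at_right[OF zero_less_one] by blast
    define t where "t = min (b/2) (1 - s)"
    have t: "0 < t" "t < b" "s + t \<le> 1" using b s01 unfolding t_def by auto
    have "g (s + t) - g 0 - (c + e) * (s + t) = (g (s + t) - g s - (c + e) * t) + (g s - g 0 - (c + e) * s)"
      by (simp add: algebra_simps)
    also have "\<dots> \<le> 0" using bb[OF t(1,2)] sS unfolding S_def by simp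
    finally have "s + t \<in> S" using t s01 unfolding S_def by simp
    hence "s + t \<le> s" unfolding s_def by (rule cSup_upper[OF _ bdd])
    thus False using t by simp
  qed
  show "g 1 - g 0 \<le> c + e" using sS s1 unfolding S_def by simp
qed

lemma ll_cont:
  fixes f :: "'a::euclidean_space \<Rightarrow> real"
  assumes "locally_lipschitz f"
  shows "continuous_on UNIV f"
proof (rule continuous_at_imp_continuous_on, intro ballI)
  fix x
  obtain e L where e: "e>0" and L: "\<forall>y\<in>ball x e. \<forall>z\<in>ball x e. \<bar>f y - f z\<bar> \<le> L * dist y z"
    using assms unfolding locally_lipschitz_def by blast
  have "(max L 0)-lipschitz_on (ball x e) f"
    unfolding lipschitz_on_def dist_real_def
    by (metis L max.cobounded1 max.cobounded2 mult_right_mono zero_le_dist order_trans)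
  hence "continuous_on (ball x e) f" by (rule lipschitz_on_continuous_on)
  thus "isCont f x" by (rule continuous_on_interior) (use e in simp)
qed

lemma seg:
  fixes f :: "'a::euclidean_space \<Rightarrow> real"
  assumes spb: "SPB f R1 R2 m" and K: "\<And>s. s \<in> {0..1} \<Longrightarrow> R1 * norm (a + s *\<^sub>R w) ^ m + R2 \<le> K"
  shows "f (a + w) - f a \<le> K * norm w"
proof -
  define g where "g s = f (a + s *\<^sub>R w)" for s
  have cf: "continuous_on UNIV f" using spb ll_cont unfolding SPB_def by blast
  have cg: "continuous_on UNIV g" unfolding g_def
    by (intro continuous_on_compose2[OF cf] continuous_intros) auto
  have "g 1 - g 0 \<le> K * norm w"
  proof (rule dini_mvt[OF cg])
    fix s e :: real assume s: "s \<in> {0..<1}" and e: "e > 0"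
    let ?z = "a + s *\<^sub>R w"
    have B: "(R1 * norm ?z ^ m + R2) * norm w + e \<le> K * norm w + e"
      using K[of s] s by (intro add_right_mono mult_right_mono) auto
    show "eventually (\<lambda>t. g (s + t) - g s \<le> (K * norm w + e) * t) (at_right 0)"
      using dini_step[OF spb e, of ?z w] eventually_at_right_less[of "0::real"]
    proof eventually_elim
      case (elim t)
      have "g (s + t) - g s = f (?z + t *\<^sub>R w) - f ?z" unfolding g_def by (simp add: algebra_simps scaleR_add_left)
      also have "\<dots> \<le> ((R1 * norm ?z ^ m + R2) * norm w + e) * t" using elim(1) .
      also have "\<dots> \<le> (K * norm w + e) * t" using B elim(2) by (intro mult_right_mono) auto
      finally show ?case .
    qed
  qed
  thus ?thesis unfolding g_def by simp
qed

lemma pow_conv: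
  fixes A C :: real
  assumes "A \<ge> 0" "C \<ge> 0" "m \<ge> 1"
  shows "(A + C) ^ m \<le> 2 ^ (m - 1) * (A ^ m + C ^ m)"
  using assms(3)
proof (induction m rule: dec_induct)
  case base thus ?case by simp
next
  case (step n)
  have key: "(A ^ n + C ^ n) * (A + C) \<le> 2 * (A ^ Suc n + C ^ Suc n)"
  proof -
    have "0 \<le> (A ^ n - C ^ n) * (A - C)"
    proof (cases "A \<le> C")
      case True
      hence "A ^ n \<le> C ^ n" using assms by (intro power_mono) auto
      thus ?thesis using True by (intro mult_nonpos_nonpos) auto
    next
      case False
      hence "C ^ n \<le> A ^ n" using assms by (intro power_mono) auto
      thus ?thesis using False by (intro mult_nonneg_nonneg) auto
    qed
    thus ?thesis by (simp add: algebra_simps)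
  qed
  have "(A + C) ^ Suc n = (A + C) ^ n * (A + C)" by simp
  also have "\<dots> \<le> 2 ^ (n - 1) * (A ^ n + C ^ n) * (A + C)"
    using step.IH assms by (intro mult_right_mono) auto
  also have "\<dots> \<le> 2 ^ (n - 1) * (2 * (A ^ Suc n + C ^ Suc n))"
    using key by (simp add: mult.assoc mult_left_mono)
  also have "\<dots> = 2 ^ (Suc n - 1) * (A ^ Suc n + C ^ Suc n)"
    using step.hyps by (cases n) auto
  finally show ?case .
qed

lemma bound_pt:
  fixes p :: "'a::euclidean_space"
  assumes spb: "SPB f R1 R2 m" and np: "norm p \<le> A + C" and A: "A \<ge> 0" and C: "C \<ge> 0"
  shows "R1 * norm p ^ m + R2 \<le> 2 powr (real m - 1) * R1 * A ^ m + 2 powr (real m - 1) * R1 * C ^ m + R2"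
proof (cases "m = 0")
  case True
  hence "R1 = 0" using spb unfolding SPB_def by blast
  thus ?thesis by simp
next
  case False
  have R1: "R1 \<ge> 0" using spb unfolding SPB_def by blast
  have pw: "2 powr (real m - 1) = 2 ^ (m - 1)"
    using False by (simp add: powr_realpow[symmetric] of_nat_diff)
  have "norm p ^ m \<le> (A + C) ^ m" using np by (intro power_mono) auto
  also have "\<dots> \<le> 2 ^ (m - 1) * (A ^ m + C ^ m)" using pow_conv[OF A C] False by simp
  finally have "R1 * norm p ^ m \<le> R1 * (2 ^ (m - 1) * (A ^ m + C ^ m))" using R1 by (intro mult_left_mono)
  thus ?thesis unfolding pw by (simp add: algebra_simps)
qed

theorem lemma3p3:
  fixes f :: "'a::euclidean_space \<Rightarrow> real"
    and R1 R2 :: real and m :: nat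
  assumes "SPB f R1 R2 m"
  shows "\<forall>x y. \<bar>f x - f y\<bar> \<le>
     (2 powr (real m - 1) * R1 * norm x ^ m + 2 powr (real m - 1) * R1 * norm (y - x) ^ m + R2)
       * norm (x - y)"
proof (intro allI)
  fix x y :: 'a
  define K where "K = 2 powr (real m - 1) * R1 * norm x ^ m + 2 powr (real m - 1) * R1 * norm (y - x) ^ m + R2"
  have 1: "f (x + (y - x)) - f x \<le> K * norm (y - x)"
  proof (rule seg[OF assms])
    fix s :: real assume s: "s \<in> {0..1}"
    have "norm (x + s *\<^sub>R (y - x)) \<le> norm x + norm (s *\<^sub>R (y - x))" by (rule norm_triangle_ineq)
    also have "\<dots> \<le> norm x + norm (y - x)" using s by (auto intro: mult_left_le_one_le)
    finally show "R1 * norm (x + s *\<^sub>R (y - x)) ^ m + R2 \<le> K"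
      unfolding K_def by (rule bound_pt[OF assms]) auto
  qed
  have 2: "f (y + (x - y)) - f y \<le> K * norm (x - y)"
  proof (rule seg[OF assms])
    fix s :: real assume s: "s \<in> {0..1}"
    have "y + s *\<^sub>R (x - y) = x + (1 - s) *\<^sub>R (y - x)" by (simp add: algebra_simps)
    hence "norm (y + s *\<^sub>R (x - y)) \<le> norm x + norm ((1 - s) *\<^sub>R (y - x))" by (metis norm_triangle_ineq)
    also have "\<dots> \<le> norm x + norm (y - x)" using s by (auto intro: mult_left_le_one_le)
    finally show "R1 * norm (y + s *\<^sub>R (x - y)) ^ m + R2 \<le> K"
      unfolding K_def by (rule bound_pt[OF assms]) auto
  qed
  have "norm (y - x) = norm (x - y)" by (rule norm_minus_commute)
  thus "\<bar>f x - f y\<bar> \<le> K * norm (x - y)" using 1 2 by auto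
qed

end
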